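(* The functor $\widetilde S:\mathbf{Gpd}\to(q\mathbf{ASmd})_0$ is fully faithful; that is, for groupoids $\mathcal K,\mathcal H$ the map $F\mapsto\widetilde S(F)$ is a bijection from the set of functors $\mathcal K\to\mathcal H$ onto the set of morphisms of quasi-schemoids $\widetilde S(\mathcal K)\to\widetilde S(\mathcal H)$ that send base points to base points.
   Context: Write $s(f),t(f)$ for source and target. A quasi-schemoid is a pair $(\mathcal C,S)$ with $\mathcal C$ a small category and $S$ a partition of $mor(\mathcal C)$ into nonempty blocks such that for all $\sigma,\tau,\mu\in S$ and $f,g\in\mu$ the sets $\{(a,b)\in\sigma\times\tau: s(a)=t(b), a\circ b=f\}$ and the analogous set for $g$ have equal cardinality. A morphism of quasi-schemoids $F:(\mathcal C,S)\to(\mathcal E,S')$ is a functor such that each $F(\sigma)$, $\sigma\in S$, lies in some block of $S'$. $(q\mathbf{ASmd})_0$ is the category of based quasi-schemoids: quasi-schemoids together with a subset $\mathcal C^\circ\subseteq ob(\mathcal C)$ of base points, with morphisms the morphisms of quasi-schemoids $F$ with $F(\mathcal C^\circ)\subseteq\mathcal E^\circ$. $\mathbf{Gpd}$ is the category of groupoids and functors. For a groupoid $\mathcal H$, $\widetilde S(\mathcal H)$ is the quasi-schemoid with underlying category $\widetilde{\mathcal H}$: $ob(\widetilde{\mathcal H})=mor(\mathcal H)$, $\mathrm{Hom}_{\widetilde{\mathcal H}}(g,h)=\{(h,g)\}$ if $t(h)=t(g)$ and empty otherwise, composition $(k,h)\circ(h,g)=(k,g)$; partition $\{\mathcal G_f\}_{f\in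 mor(\mathcal H)}$ with $\mathcal G_f=\{(k,l):k^{-1}l=f\}$; base points $\{1_x: x\in ob(\mathcal H)\}$. For a functor $F$, $\widetilde S(F)(f)=F(f)$, $\widetilde S(F)(f,g)=(F(f),F(g))$. *)

theory Defs
  imports Main "HOL-Library.FuncSet" "HOL-Library.Equipollence"
begin

record ('o, 'm) cat =
  Obj  :: "'o set"
  Mor  :: "'m set"
  Dom  :: "'m \<Rightarrow> 'o"
  Cod  :: "'m \<Rightarrow> 'o"
  Idm  :: "'o \<Rightarrow> 'm"
  Comp :: "'m \<Rightarrow> 'm \<Rightarrow> 'm"   (* Comp C g f = g o f, defined when Dom g = Cod f *)

definition category :: "('o, 'm) cat \<Rightarrow> bool" where
  "category C \<longleftrightarrow>
     (\<forall>f\<in>Mor C. Dom C f \<in> Obj C \<and> Cod C f \<in> Obj C) \<and>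
     (\<forall>x\<in>Obj C. Idm C x \<in> Mor C \<and> Dom C (Idm C x) = x \<and> Cod C (Idm C x) = x) \<and>
     (\<forall>f\<in>Mor C. \<forall>g\<in>Mor C. Dom C g = Cod C f \<longrightarrow>
        Comp C g f \<in> Mor C \<and> Dom C (Comp C g f) = Dom C f \<and> Cod C (Comp C g f) = Cod C g) \<and>
     (\<forall>f\<in>Mor C. Comp C (Idm C (Cod C f)) f = f \<and> Comp C f (Idm C (Dom C f)) = f) \<and>
     (\<forall>f\<in>Mor C. \<forall>g\<in>Mor C. \<forall>h\<in>Mor C. Dom C g = Cod C f \<longrightarrow> Dom C h = Cod C g \<longrightarrow>
        Comp C h (Comp C g f) = Comp C (Comp C h g) f)"

definition groupoid :: "('o, 'm) cat \<Rightarrow> bool" where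
  "groupoid C \<longleftrightarrow> category C \<and>
     (\<forall>f\<in>Mor C. \<exists>g\<in>Mor C. Dom C g = Cod C f \<and> Cod C g = Dom C f \<and>
        Comp C g f = Idm C (Dom C f) \<and> Comp C f g = Idm C (Cod C f))"

definition Inv :: "('o, 'm) cat \<Rightarrow> 'm \<Rightarrow> 'm" where
  "Inv C f = (SOME g. g \<in> Mor C \<and> Dom C g = Cod C f \<and> Cod C g = Dom C f \<and>
        Comp C g f = Idm C (Dom C f) \<and> Comp C f g = Idm C (Cod C f))"

text \<open>A functor is a pair (object map, morphism map), both extensional
  (undefined outside the carriers), so that the set of functors is a set.\<close>

definition is_functor ::
  "('o1, 'm1) cat \<Rightarrow> ('o2, 'm2) cat \<Rightarrow> ('o1 \<Rightarrow> 'o2) \<times> ('m1 \<Rightarrow> 'm2) \<Rightarrow> bool" where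
  "is_functor C D F \<longleftrightarrow>
     (case F of (Fo, Fm) \<Rightarrow>
       Fo \<in> extensional (Obj C) \<and> Fm \<in> extensional (Mor C) \<and>
       Fo \<in> Obj C \<rightarrow> Obj D \<and> Fm \<in> Mor C \<rightarrow> Mor D \<and>
       (\<forall>f\<in>Mor C. Dom D (Fm f) = Fo (Dom C f) \<and> Cod D (Fm f) = Fo (Cod C f)) \<and>
       (\<forall>x\<in>Obj C. Fm (Idm C x) = Idm D (Fo x)) \<and>
       (\<forall>f\<in>Mor C. \<forall>g\<in>Mor C. Dom C g = Cod C f \<longrightarrow>
          Fm (Comp C g f) = Comp D (Fm g) (Fm f)))"

text \<open>A based quasi-schemoid: (category, partition of the morphisms, base points).\<close>

type_synonym ('o, 'm) bqs = "('o, 'm) cat \<times> 'm set set \<times> 'o set"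

definition is_partition :: "'m set \<Rightarrow> 'm set set \<Rightarrow> bool" where
  "is_partition M S \<longleftrightarrow> \<Union>S = M \<and> {} \<notin> S \<and>
     (\<forall>A\<in>S. \<forall>B\<in>S. A \<noteq> B \<longrightarrow> A \<inter> B = {})"

definition quasi_schemoid :: "('o, 'm) cat \<Rightarrow> 'm set set \<Rightarrow> bool" where
  "quasi_schemoid C S \<longleftrightarrow> category C \<and> is_partition (Mor C) S \<and>
     (\<forall>\<sigma>\<in>S. \<forall>\<tau>\<in>S. \<forall>\<mu>\<in>S. \<forall>f\<in>\<mu>. \<forall>g\<in>\<mu>.
        {(a, b) \<in> \<sigma> \<times> \<tau>. Dom C a = Cod C b \<and> Comp C a b = f} \<approx>
        {(a, b) \<in> \<sigma> \<times> \<tau>. Dom C a = Cod C b \<and> Comp C a b = g})"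

definition qs_morphism ::
  "('o1, 'm1) cat \<Rightarrow> 'm1 set set \<Rightarrow> ('o2, 'm2) cat \<Rightarrow> 'm2 set set \<Rightarrow>
   ('o1 \<Rightarrow> 'o2) \<times> ('m1 \<Rightarrow> 'm2) \<Rightarrow> bool" where
  "qs_morphism C S D S' F \<longleftrightarrow> is_functor C D F \<and>
     (\<forall>\<sigma>\<in>S. \<exists>\<sigma>'\<in>S'. snd F ` \<sigma> \<subseteq> \<sigma>')"

definition based_qs_morphism ::
  "('o1, 'm1) bqs \<Rightarrow> ('o2, 'm2) bqs \<Rightarrow> ('o1 \<Rightarrow> 'o2) \<times> ('m1 \<Rightarrow> 'm2) \<Rightarrow> bool" where
  "based_qs_morphism X Y F \<longleftrightarrow>
     (case X of (C, S, B) \<Rightarrow> case Y of (D, S', B') \<Rightarrow>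
        qs_morphism C S D S' F \<and> fst F ` B \<subseteq> B')"

definition Htilde :: "('o, 'm) cat \<Rightarrow> ('m, 'm \<times> 'm) cat" where
  "Htilde H = \<lparr> Obj = Mor H,
               Mor = {(h, g). h \<in> Mor H \<and> g \<in> Mor H \<and> Cod H h = Cod H g},
               Dom = snd, Cod = fst,
               Idm = (\<lambda>g. (g, g)),
               Comp = (\<lambda>(k, h') (h, g). (k, g)) \<rparr>"

definition Gblock :: "('o, 'm) cat \<Rightarrow> 'm \<Rightarrow> ('m \<times> 'm) set" where
  "Gblock H f = {(k, l) \<in> Mor (Htilde H). Comp H (Inv H k) l = f}"

definition Stilde :: "('o, 'm) cat \<Rightarrow> ('m, 'm \<times> 'm) bqs" where
  "Stilde H = (Htilde H, Gblock H ` Mor H, Idm H ` Obj H)"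

definition Stilde_fun ::
  "('o1, 'm1) cat \<Rightarrow> ('o1 \<Rightarrow> 'o2) \<times> ('m1 \<Rightarrow> 'm2) \<Rightarrow>
   ('m1 \<Rightarrow> 'm2) \<times> ('m1 \<times> 'm1 \<Rightarrow> 'm2 \<times> 'm2)" where
  "Stilde_fun K F = (restrict (snd F) (Mor K),
                     restrict (\<lambda>(f, g). (snd F f, snd F g)) (Mor (Htilde K)))"

end

theory Submission
  imports Defs
begin

lemma Htilde_simps[simp]:
  "Obj (Htilde H) = Mor H"
  "Mor (Htilde H) = {(h, g). h \<in> Mor H \<and> g \<in> Mor H \<and> Cod H h = Cod H g}"
  "Dom (Htilde H) = snd" "Cod (Htilde H) = fst" "Idm (Htilde H) = (\<lambda>g. (g, g))"
  "Comp (Htilde H) = (\<lambda>(k, h') (h, g). (k, g))"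
  by (simp_all add: Htilde_def)

context
  fixes C :: "('o,'m) cat"
  assumes gC: "groupoid C"
begin

lemma cC: "category C" using gC by (simp add: groupoid_def)

lemma dc: "f \<in> Mor C \<Longrightarrow> Dom C f \<in> Obj C \<and> Cod C f \<in> Obj C"
  using cC by (simp add: category_def)
lemma idm: "x \<in> Obj C \<Longrightarrow> Idm C x \<in> Mor C \<and> Dom C (Idm C x) = x \<and> Cod C (Idm C x) = x"
  using cC by (simp add: category_def)
lemma comp: "f \<in> Mor C \<Longrightarrow> g \<in> Mor C \<Longrightarrow> Dom C g = Cod C f \<Longrightarrow>
        Comp C g f \<in> Mor C \<and> Dom C (Comp C g f) = Dom C f \<and> Cod C (Comp C g f) = Cod C g"
  using cC by (simp add: category_def)
lemma idl: "f \<in> Mor C \<Longrightarrow> Comp C (Idm C (Cod C f)) f = f"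
  using cC by (simp add: category_def)
lemma idr: "f \<in> Mor C \<Longrightarrow> Comp C f (Idm C (Dom C f)) = f"
  using cC by (simp add: category_def)
lemma assoc: "f \<in> Mor C \<Longrightarrow> g \<in> Mor C \<Longrightarrow> h \<in> Mor C \<Longrightarrow> Dom C g = Cod C f \<Longrightarrow> Dom C h = Cod C g \<Longrightarrow>
        Comp C h (Comp C g f) = Comp C (Comp C h g) f"
  using cC by (simp add: category_def)

lemma Inv: "f \<in> Mor C \<Longrightarrow> Inv C f \<in> Mor C \<and> Dom C (Inv C f) = Cod C f \<and> Cod C (Inv C f) = Dom C f \<and>
        Comp C (Inv C f) f = Idm C (Dom C f) \<and> Comp C f (Inv C f) = Idm C (Cod C f)"
  unfolding Inv_def
  by (rule someI_ex) (use gC in \<open>auto simp: groupoid_def\<close>)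

lemma Inv_unique:
  assumes f: "f \<in> Mor C" and g: "g \<in> Mor C" and d: "Dom C g = Cod C f"
    and e: "Comp C g f = Idm C (Dom C f)"
  shows "g = Inv C f"
proof -
  have I: "Inv C f \<in> Mor C" "Dom C (Inv C f) = Cod C f" "Cod C (Inv C f) = Dom C f"
    "Comp C f (Inv C f) = Idm C (Cod C f)" using Inv[OF f] by auto
  have "g = Comp C g (Idm C (Dom C g))" using idr[OF g] by simp
  also have "\<dots> = Comp C g (Comp C f (Inv C f))" using I d by simp
  also have "\<dots> = Comp C (Comp C g f) (Inv C f)" using assoc[OF I(1) f g] I d by simp
  also have "\<dots> = Comp C (Idm C (Cod C (Inv C f))) (Inv C f)" using e I by simp
  also have "\<dots> = Inv C f" using idl[OF I(1)] .
  finally show ?thesis .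
qed

lemma Inv_Idm: "x \<in> Obj C \<Longrightarrow> Inv C (Idm C x) = Idm C x"
  by (rule Inv_unique[symmetric]) (use idm idl in \<open>auto\<close>, metis idm idl)

lemma Inv_Inv: "f \<in> Mor C \<Longrightarrow> Inv C (Inv C f) = f"
  by (rule Inv_unique[symmetric]) (use Inv in auto)

end

lemma functor_Inv:
  assumes gK: "groupoid K" and gH: "groupoid H" and F: "is_functor K H (Fo, Fm)"
    and f: "f \<in> Mor K"
  shows "Fm (Inv K f) = Inv H (Fm f)"
proof -
  have I: "Inv K f \<in> Mor K" "Dom K (Inv K f) = Cod K f" "Cod K (Inv K f) = Dom K f"
    "Comp K (Inv K f) f = Idm K (Dom K f)" using Inv[OF gK f] by auto
  have Fm: "Fm \<in> Mor K \<rightarrow> Mor H" "\<forall>f\<in>Mor K. Dom H (Fm f) = Fo (Dom K f) \<and> Cod H (Fm f) = Fo (Cod K f)"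
    "\<forall>x\<in>Obj K. Fm (Idm K x) = Idm H (Fo x)"
    "\<forall>f\<in>Mor K. \<forall>g\<in>Mor K. Dom K g = Cod K f \<longrightarrow> Fm (Comp K g f) = Comp H (Fm g) (Fm f)"
    using F by (auto simp: is_functor_def)
  show ?thesis
  proof (rule Inv_unique[OF gH])
    show "Fm f \<in> Mor H" "Fm (Inv K f) \<in> Mor H" using Fm(1) f I by auto
    show "Dom H (Fm (Inv K f)) = Cod H (Fm f)" using Fm(2) f I by auto
    show "Comp H (Fm (Inv K f)) (Fm f) = Idm H (Dom H (Fm f))"
      using Fm(2-4) f I dc[OF gK f] by (metis)
  qed
qed

theorem corollary3p5:
  fixes K :: "('o1, 'm1) cat" and H :: "('o2, 'm2) cat"
  assumes gK: "groupoid K" and gH: "groupoid H"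
  shows "bij_betw (Stilde_fun K)
           {F. is_functor K H F}
           {G. based_qs_morphism (Stilde K) (Stilde H) G}"
proof -
  have fwd: "based_qs_morphism (Stilde K) (Stilde H) (Stilde_fun K F)" if F0: "is_functor K H F" for F
  proof -
    obtain Fo Fm where Fe: "F = (Fo, Fm)" by (cases F)
    note F = F0[unfolded Fe]
    have Fm: "\<And>f. f \<in> Mor K \<Longrightarrow> Fm f \<in> Mor H"
      "\<And>f. f \<in> Mor K \<Longrightarrow> Dom H (Fm f) = Fo (Dom K f)"
      "\<And>f. f \<in> Mor K \<Longrightarrow> Cod H (Fm f) = Fo (Cod K f)"
      "\<And>x. x \<in> Obj K \<Longrightarrow> Fm (Idm K x) = Idm H (Fo x)"
      "\<And>x. x \<in> Obj K \<Longrightarrow> Fo x \<in> Obj H"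
      "\<And>f g. f \<in> Mor K \<Longrightarrow> g \<in> Mor K \<Longrightarrow> Dom K g = Cod K f \<Longrightarrow> Fm (Comp K g f) = Comp H (Fm g) (Fm f)"
      using F by (auto simp: is_functor_def)
    have blk: "\<exists>\<sigma>'\<in>Gblock H ` Mor H.
        (\<lambda>p\<in>Mor (Htilde K). case p of (f, g) \<Rightarrow> (Fm f, Fm g)) ` \<sigma> \<subseteq> \<sigma>'"
      if sig: "\<sigma> \<in> Gblock K ` Mor K" for \<sigma>
    proof -
      obtain f where f: "f \<in> Mor K" and s: "\<sigma> = Gblock K f" using sig by auto
      have "(\<lambda>p\<in>Mor (Htilde K). case p of (f, g) \<Rightarrow> (Fm f, Fm g)) ` \<sigma> \<subseteq> Gblock H (Fm f)"
      proof
        fix q assume "q \<in> (\<lambda>p\<in>Mor (Htilde K). case p of (f, g) \<Rightarrow> (Fm f, Fm g)) ` \<sigma>"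
        then obtain k l where kl: "k \<in> Mor K" "l \<in> Mor K" "Cod K k = Cod K l"
          "Comp K (Inv K k) l = f" and q: "q = (Fm k, Fm l)"
          using s by (auto simp: Gblock_def)
        have I: "Inv K k \<in> Mor K" "Dom K (Inv K k) = Cod K k" using Inv[OF gK kl(1)] by auto
        have "Comp H (Inv H (Fm k)) (Fm l) = Fm f"
          using functor_Inv[OF gK gH F kl(1)] Fm(6)[OF kl(2) I(1)] I kl by simp
        then show "q \<in> Gblock H (Fm f)" using q kl Fm by (auto simp: Gblock_def)
      qed
      then show ?thesis using f Fm(1) by blast
    qed
    show ?thesis
      unfolding based_qs_morphism_def Stilde_def qs_morphism_def Stilde_fun_def Fe
      using Fm blk idm[OF gK]
      by (auto simp: is_functor_def Pi_def image_subset_iff)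
  qed
  have inj: "inj_on (Stilde_fun K) {F. is_functor K H F}"
  proof
    fix F1 F2 assume a: "F1 \<in> {F. is_functor K H F}" "F2 \<in> {F. is_functor K H F}"
      and e: "Stilde_fun K F1 = Stilde_fun K F2"
    obtain Fo1 Fm1 where F1: "F1 = (Fo1, Fm1)" by (cases F1)
    obtain Fo2 Fm2 where F2: "F2 = (Fo2, Fm2)" by (cases F2)
    have "restrict Fm1 (Mor K) = restrict Fm2 (Mor K)" using e F1 F2 by (simp add: Stilde_fun_def)
    moreover have "Fm1 \<in> extensional (Mor K)" "Fm2 \<in> extensional (Mor K)"
      "Fo1 \<in> extensional (Obj K)" "Fo2 \<in> extensional (Obj K)"
      using a F1 F2 by (auto simp: is_functor_def)
    ultimately have m: "Fm1 = Fm2" by (metis extensional_restrict)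
    have "Fo1 = Fo2"
    proof (rule extensionalityI[OF \<open>Fo1 \<in> _\<close> \<open>Fo2 \<in> _\<close>])
      fix x assume x: "x \<in> Obj K"
      have "Dom K (Idm K x) = x" "Idm K x \<in> Mor K" using idm[OF gK x] by auto
      moreover have "Dom H (Fm1 (Idm K x)) = Fo1 (Dom K (Idm K x))"
        using a(1) F1 \<open>Idm K x \<in> Mor K\<close> by (simp add: is_functor_def)
      moreover have "Dom H (Fm2 (Idm K x)) = Fo2 (Dom K (Idm K x))"
        using a(2) F2 \<open>Idm K x \<in> Mor K\<close> by (simp add: is_functor_def)
      ultimately show "Fo1 x = Fo2 x" using m by simp
    qed
    then show "F1 = F2" using m F1 F2 by simp
  qed
  have surj: "\<exists>F. is_functor K H F \<and> G = Stilde_fun K F"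
    if G0: "based_qs_morphism (Stilde K) (Stilde H) G" for G
  proof -
    obtain G0 G1 where Ge: "G = (G0, G1)" by (cases G)
    have GG: "is_functor (Htilde K) (Htilde H) (G0,G1) \<and>
       (\<forall>\<sigma>\<in>Gblock K ` Mor K. \<exists>\<sigma>'\<in>Gblock H ` Mor H. G1 ` \<sigma> \<subseteq> \<sigma>') \<and>
       G0 ` Idm K ` Obj K \<subseteq> Idm H ` Obj H"
      using G0 unfolding Ge based_qs_morphism_def Stilde_def qs_morphism_def prod.case snd_conv fst_conv by auto
    have hF: "G0 \<in> extensional (Obj (Htilde K)) \<and> G1 \<in> extensional (Mor (Htilde K)) \<and>
       G0 \<in> Obj (Htilde K) \<rightarrow> Obj (Htilde H) \<and> G1 \<in> Mor (Htilde K) \<rightarrow> Mor (Htilde H) \<and>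
       (\<forall>f\<in>Mor (Htilde K). Dom (Htilde H) (G1 f) = G0 (Dom (Htilde K) f) \<and> Cod (Htilde H) (G1 f) = G0 (Cod (Htilde K) f))"
      using GG[THEN conjunct1] unfolding is_functor_def prod.case by (elim conjE) (intro conjI; assumption)
    have ext0: "G0 \<in> extensional (Mor K)" and ext1: "G1 \<in> extensional (Mor (Htilde K))"
      using hF by simp_all
    have G0M: "\<And>f. f \<in> Mor K \<Longrightarrow> G0 f \<in> Mor H" using hF by (simp add: Pi_iff)
    have G1M: "\<And>p. p \<in> Mor (Htilde K) \<Longrightarrow> G1 p \<in> Mor (Htilde H) \<and> snd (G1 p) = G0 (snd p) \<and> fst (G1 p) = G0 (fst p)"
      using hF by (metis Htilde_simps(3,4) PiE)
    have G1: "\<And>h g. h \<in> Mor K \<Longrightarrow> g \<in> Mor K \<Longrightarrow> Cod K h = Cod K g \<Longrightarrow>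
        G1 (h, g) = (G0 h, G0 g) \<and> Cod H (G0 h) = Cod H (G0 g)"
    proof -
      fix h g assume hg: "h \<in> Mor K" "g \<in> Mor K" "Cod K h = Cod K g"
      have "G1 (h, g) \<in> Mor (Htilde H)" "snd (G1 (h,g)) = G0 g" "fst (G1 (h,g)) = G0 h"
        using G1M[of "(h,g)"] hg by auto
      then show "G1 (h, g) = (G0 h, G0 g) \<and> Cod H (G0 h) = Cod H (G0 g)"
        by (cases "G1 (h,g)") auto
    qed
    have base: "\<And>x. x \<in> Obj K \<Longrightarrow> \<exists>y\<in>Obj H. G0 (Idm K x) = Idm H y"
      using GG by (auto simp: image_subset_iff)
    have blocks: "\<And>f. f \<in> Mor K \<Longrightarrow> \<exists>f'\<in>Mor H. G1 ` Gblock K f \<subseteq> Gblock H f'"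
      using GG by auto
    have key: "Comp H (Inv H (G0 k)) (G0 l) = G0 (Comp K (Inv K k) l)"
      if kl: "k \<in> Mor K" "l \<in> Mor K" "Cod K k = Cod K l" for k l
    proof -
      define f where "f = Comp K (Inv K k) l"
      have I: "Inv K k \<in> Mor K" "Dom K (Inv K k) = Cod K k" "Cod K (Inv K k) = Dom K k"
        using Inv[OF gK kl(1)] by auto
      have f: "f \<in> Mor K" "Cod K f = Dom K k" using comp[OF gK kl(2) I(1)] I kl f_def by auto
      obtain f' where f': "f' \<in> Mor H" "G1 ` Gblock K f \<subseteq> Gblock H f'" using blocks[OF f(1)] by blast
      have cf: "Cod K f \<in> Obj K" using dc[OF gK f(1)] by auto
      have i: "Idm K (Cod K f) \<in> Mor K" "Cod K (Idm K (Cod K f)) = Cod K f" using idm[OF gK cf] by auto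
      have "(Idm K (Cod K f), f) \<in> Gblock K f"
        using i f Inv_Idm[OF gK cf] idl[OF gK f(1)] by (simp add: Gblock_def)
      then have "G1 (Idm K (Cod K f), f) \<in> Gblock H f'" using f' by auto
      moreover obtain y where y: "y \<in> Obj H" "G0 (Idm K (Cod K f)) = Idm H y" using base[OF cf] by blast
      ultimately have m: "Comp H (Inv H (Idm H y)) (G0 f) = f'" "Cod H (Idm H y) = Cod H (G0 f)"
        using G1[OF i(1) f(1) i(2)] by (auto simp: Gblock_def)
      have "f' = G0 f" using m Inv_Idm[OF gH y(1)] idm[OF gH y(1)] idl[OF gH G0M[OF f(1)]] by simp
      moreover have "(k, l) \<in> Gblock K f" using kl f_def by (simp add: Gblock_def)
      then have "G1 (k, l) \<in> Gblock H f'" using f' by auto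
      ultimately show ?thesis using G1[OF kl] f_def by (simp add: Gblock_def)
    qed
    define Fo where "Fo = (\<lambda>x\<in>Obj K. Dom H (G0 (Idm K x)))"
    have idG: "G0 (Idm K x) = Idm H (Fo x)" "Fo x \<in> Obj H" if x: "x \<in> Obj K" for x
    proof -
      obtain y where y: "y \<in> Obj H" "G0 (Idm K x) = Idm H y" using base[OF x] by blast
      then show "G0 (Idm K x) = Idm H (Fo x)" "Fo x \<in> Obj H"
        using idm[OF gH y(1)] x by (auto simp: Fo_def)
    qed
    have domG: "Dom H (G0 f) = Fo (Dom K f)" if f: "f \<in> Mor K" for f
    proof -
      have "Comp H (Inv H (G0 f)) (G0 f) = G0 (Idm K (Dom K f))"
        using key[OF f f] Inv[OF gK f] by simp
      then have "Idm H (Dom H (G0 f)) = Idm H (Fo (Dom K f))"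
        using Inv[OF gH G0M[OF f]] idG(1)[of "Dom K f"] dc[OF gK f] by simp
      then have "Dom H (Idm H (Dom H (G0 f))) = Dom H (Idm H (Fo (Dom K f)))" by simp
      then show ?thesis using idm[OF gH, of "Dom H (G0 f)"] idm[OF gH, of "Fo (Dom K f)"]
          dc[OF gH G0M[OF f]] idG(2)[of "Dom K f"] dc[OF gK f] by simp
    qed
    have codG: "Cod H (G0 f) = Fo (Cod K f)" if f: "f \<in> Mor K" for f
    proof -
      have cf: "Cod K f \<in> Obj K" using dc[OF gK f] by auto
      have i: "Idm K (Cod K f) \<in> Mor K" "Cod K (Idm K (Cod K f)) = Cod K f" using idm[OF gK cf] by auto
      have "Cod H (G0 (Idm K (Cod K f))) = Cod H (G0 f)" using G1[OF i(1) f i(2)] by simp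
      then show ?thesis using idG[OF cf] idm[OF gH] by metis
    qed
    have invG: "G0 (Inv K g) = Inv H (G0 g)" if g: "g \<in> Mor K" for g
    proof -
      have cg: "Cod K g \<in> Obj K" using dc[OF gK g] by auto
      have i: "Idm K (Cod K g) \<in> Mor K" "Cod K (Idm K (Cod K g)) = Cod K g" using idm[OF gK cg] by auto
      have "Comp H (Inv H (G0 g)) (G0 (Idm K (Cod K g))) = G0 (Comp K (Inv K g) (Idm K (Cod K g)))"
        using key[OF g i(1)] i by simp
      also have "\<dots> = G0 (Inv K g)" using idr[OF gK, of "Inv K g"] Inv[OF gK g] by simp
      finally show ?thesis
        using idG[OF cg] codG[OF g] Inv[OF gH G0M[OF g]] idr[OF gH, of "Inv H (G0 g)"] by simp
    qed
    have compG: "G0 (Comp K g f) = Comp H (G0 g) (G0 f)"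
      if fg: "f \<in> Mor K" "g \<in> Mor K" "Dom K g = Cod K f" for f g
    proof -
      have I: "Inv K g \<in> Mor K" "Cod K (Inv K g) = Cod K f" using Inv[OF gK fg(2)] fg by auto
      have "G0 (Comp K g f) = G0 (Comp K (Inv K (Inv K g)) f)" using Inv_Inv[OF gK fg(2)] by simp
      also have "\<dots> = Comp H (Inv H (G0 (Inv K g))) (G0 f)" using key[OF I(1) fg(1) I(2)] by simp
      also have "\<dots> = Comp H (G0 g) (G0 f)" using invG[OF fg(2)] Inv_Inv[OF gH G0M[OF fg(2)]] by simp
      finally show ?thesis .
    qed
    have F: "is_functor K H (Fo, G0)"
      unfolding is_functor_def using ext0 G0M idG domG codG compG
      by (auto simp: Fo_def)
    have "G = Stilde_fun K (Fo, G0)"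
    proof -
      have "restrict G0 (Mor K) = G0" using ext0 by (simp add: extensional_restrict)
      moreover have "restrict (\<lambda>(f, g). (G0 f, G0 g)) (Mor (Htilde K)) = G1"
      proof (rule extensionalityI[OF _ ext1])
        show "restrict (\<lambda>(f, g). (G0 f, G0 g)) (Mor (Htilde K)) \<in> extensional (Mor (Htilde K))" by simp
        fix p assume "p \<in> Mor (Htilde K)"
        then show "restrict (\<lambda>(f, g). (G0 f, G0 g)) (Mor (Htilde K)) p = G1 p"
          using G1 by (cases p) auto
      qed
      ultimately show ?thesis using Ge by (simp add: Stilde_fun_def)
    qed
    then show ?thesis using F by blast
  qed
  show ?thesis
    unfolding bij_betw_def
  proof (intro conjI inj)
    show "Stilde_fun K ` {F. is_functor K H F} = {G. based_qs_morphism (Stilde K) (Stilde H) G}"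
      using fwd surj by blast
  qed
qed

end
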